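(* Let $\beta=\gamma=\eta=1$. Let Assumptions A1, A2 and A3 hold with $\varepsilon_0=\varepsilon\le1$. Let $T\in\mathbb{N}$ satisfy $T\le\frac{1}{2\varepsilon^2}$, and let $R\ge2\|r_0\|(\sqrt T+2\varepsilon T^2)$. Then for all $\tau\le T$: $$\|\theta_\tau-\theta_0\|\le\tfrac R2,\qquad \|\tilde r_\tau-r_\tau\|\le4\varepsilon\tau\|r_0\|,\qquad \|\tilde\theta_\tau-\theta_\tau\|\le2\varepsilon\tau^2\|r_0\|.$$
   Context: Norms: $\|\cdot\|$ is the Euclidean norm for vectors and the spectral norm for matrices. Setting. Let $f:\mathbb{R}^N\to\mathbb{R}^n$ be continuously differentiable with Jacobian $\mathcal{J}(\theta)\in\mathbb{R}^{n\times N}$. Let $A\in\mathbb{R}^{m\times n}$ and let $\gamma\ge\|A\|$. Fix $y\in\mathbb{R}^m$, a starting point $\theta_0\in\mathbb{R}^N$, and a fixed deterministic "reference Jacobian" $J\in\mathbb{R}^{n\times N}$. Iterations. Gradient descent with step size $\eta>0$ is applied to $\mathcal{L}(\theta)=\frac12\|Af(\theta)-y\|^2$ and to $\mathcal{L}_{\rm lin}(\theta)=\frac12\|Af(\theta_0)+AJ(\theta-\theta_0)-y\|^2$, both started at $\theta_0=\tilde\theta_0$: $$\theta_{\tau+1}=\theta_\tau-\eta\mathcal{J}(\theta_\tau)^\top A^\top r_\tau,\qquad r_\tau:=Af(\theta_\tau)-y,$$ $$\tilde\theta_{\tau+1}=\tilde\theta_\tau-\eta J^\top A^\top\tilde r_\tau,\qquad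 \tilde r_\tau:=Af(\theta_0)+AJ(\tilde\theta_\tau-\theta_0)-y.$$ Assumption A1: there is $\beta>0$ with $\|J\|\le\beta$ and $\|\mathcal{J}(\theta)\|\le\beta$ for all $\theta\in\mathbb{R}^N$. Assumption A2: there is $\varepsilon_0>0$ with $\|\mathcal{J}(\theta_0)-J\|\le\varepsilon_0$ and $\|\mathcal{J}(\theta_0)\mathcal{J}(\theta_0)^\top-JJ^\top\|\le\varepsilon_0^2$. Assumption A3: there are $\varepsilon>0$ and $R>0$ with $\|\mathcal{J}(\theta)-\mathcal{J}(\theta_0)\|\le\varepsilon/2$ for all $\theta$ satisfying $\|\theta-\theta_0\|\le R$. *)

theory Defs
  imports "HOL-Analysis.Analysis"
begin

definition spec_norm :: "real^'c^'r \<Rightarrow> real" where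
  "spec_norm M = onorm (\<lambda>x. M *v x)"

end

theory Submission
  imports Defs
begin


lemma sn_bound: "norm (M *v x) \<le> spec_norm M * norm (x::real^'c)"
  unfolding spec_norm_def by (rule onorm) simp

lemma adj: "inner (transpose M *v x) w = inner x (M *v (w::real^'c))"
  by (simp add: dot_lmul_matrix)

lemma sn_nonneg: "0 \<le> spec_norm (M::real^'c^'r)"
  unfolding spec_norm_def by (rule onorm_pos_le) simp

lemma snT_bound: "norm (transpose M *v x) \<le> spec_norm (M::real^'c^'r) * norm x"
proof -
  let ?w = "transpose M *v x"
  have "norm ?w ^ 2 = inner ?w ?w" by (simp add: power2_norm_eq_inner)
  also have "\<dots> = inner x (M *v ?w)" by (rule adj)
  also have "\<dots> \<le> norm x * norm (M *v ?w)" by (rule norm_cauchy_schwarz)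
  also have "\<dots> \<le> norm x * (spec_norm M * norm ?w)" by (simp add: mult_left_mono sn_bound)
  finally have h: "norm ?w * norm ?w \<le> (spec_norm M * norm x) * norm ?w" by (simp add: power2_eq_square algebra_simps)
  show ?thesis
  proof (cases "norm ?w = 0")
    case True then show ?thesis using sn_nonneg[of M] by simp
  next
    case False then have "norm ?w > 0" by simp
    with h show ?thesis by (metis mult_le_cancel_right_pos)
  qed
qed

lemma sn_le: "spec_norm M \<le> e \<Longrightarrow> norm (M *v x) \<le> e * norm x"
  by (rule order_trans[OF sn_bound mult_right_mono]) simp_all

lemma snT_le: "spec_norm M \<le> e \<Longrightarrow> norm (transpose M *v x) \<le> e * norm x"
  by (rule order_trans[OF snT_bound mult_right_mono]) simp_all

lemma sn_le1: "spec_norm M \<le> 1 \<Longrightarrow> norm (M *v x) \<le> norm x"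
  using sn_le[of M 1 x] by simp

lemma snT_le1: "spec_norm M \<le> 1 \<Longrightarrow> norm (transpose M *v x) \<le> norm x"
  using snT_le[of M 1 x] by simp

lemma contr:
  fixes x k :: "'a::real_inner"
  assumes "norm k \<le> norm u" "inner x k = norm u ^ 2"
  shows "norm (x - k) ^ 2 \<le> norm x ^ 2 - norm u ^ 2"
proof -
  have "norm (x - k) ^ 2 = norm x ^ 2 - 2 * inner x k + norm k ^ 2"
    by (simp add: power2_norm_eq_inner inner_diff inner_commute)
  moreover have "norm k ^ 2 \<le> norm u ^ 2" using assms(1) by (simp add: power_mono)
  ultimately show ?thesis using assms(2) by simp
qed

lemma nl:
  fixes r z v k :: "'a::real_inner"
  assumes "norm z \<le> norm u" "z = v - k" "inner r k = norm u ^ 2" "norm v \<le> e * norm u" "0 \<le> e"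
  shows "norm (r + z) ^ 2 \<le> (1 + e ^ 2) * norm r ^ 2"
proof -
  have "norm (r + z) ^ 2 = norm r ^ 2 + 2 * inner r z + norm z ^ 2"
    by (simp add: power2_norm_eq_inner inner_add inner_commute)
  also have "inner r z = inner r v - norm u ^ 2" using assms(2,3) by (simp add: inner_diff)
  also have "norm z ^ 2 \<le> norm u ^ 2" using assms(1) by (simp add: power_mono)
  finally have 1: "norm (r + z) ^ 2 \<le> norm r ^ 2 + 2 * inner r v - norm u ^ 2" by simp
  have "inner r v \<le> norm r * norm v" by (rule norm_cauchy_schwarz)
  also have "\<dots> \<le> norm r * (e * norm u)" using assms(4) by (simp add: mult_left_mono)
  finally have 2: "inner r v \<le> (e * norm r) * norm u" by (simp add: mult_ac)
  have 3: "2 * (e * norm r) * norm u \<le> (e * norm r) ^ 2 + norm u ^ 2"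
    by (rule sum_squares_bound)
  have 4: "(e * norm r) ^ 2 = e^2 * norm r ^ 2" by (simp add: power_mult_distrib)
  have 5: "(1 + e ^ 2) * norm r ^ 2 = norm r ^ 2 + e^2 * norm r ^ 2" by (simp add: distrib_right)
  show ?thesis using 1 2 3 4 5 by linarith
qed

lemma amgm_step:
  fixes D G S t :: real
  assumes "0 \<le> D" "0 \<le> G" "0 \<le> t" "0 \<le> S" "D ^ 2 \<le> t * S"
  shows "(D + G) ^ 2 \<le> (t + 1) * (S + G ^ 2)"
proof -
  have "(2 * D * G) ^ 2 \<le> (S + t * G ^ 2) ^ 2"
  proof -
    have "(2 * D * G) ^ 2 = 4 * D ^ 2 * G ^ 2" by (simp add: power_mult_distrib)
    also have "\<dots> \<le> 4 * (t * S) * G ^ 2"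
      using assms(5) by (intro mult_right_mono) (linarith, rule zero_le_power2)
    also have "\<dots> \<le> (S + t * G ^ 2) ^ 2"
    proof -
      have a: "(S + t * G ^ 2) ^ 2 = S^2 + (t * G^2)^2 + 2 * S * (t * G^2)" by (rule power2_sum)
      have b: "4 * (t * S) * G ^ 2 = 2 * (2 * S * (t * G^2))" by (simp add: mult_ac)
      show ?thesis using a b sum_squares_bound[of "S" "t*G^2"] by linarith
    qed
    finally show ?thesis .
  qed
  moreover have "0 \<le> S + t * G ^ 2" using assms by simp
  ultimately have 1: "2 * D * G \<le> S + t * G ^ 2"
    by (rule power2_le_imp_le)
  have 2: "(D + G) ^ 2 = D^2 + 2 * D * G + G^2" by (simp add: power2_sum)
  have 3: "(t + 1) * (S + G ^ 2) = t * S + S + t * G^2 + G^2" by (simp add: algebra_simps)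
  show ?thesis using 1 2 3 assms(5) by linarith
qed


lemma tri3: "norm (a + b + c) \<le> norm a + norm b + norm (c::'a::real_normed_vector)"
  using norm_triangle_ineq[of "a+b" c] norm_triangle_ineq[of a b] by linarith

lemma tri3m: "norm (a + b - c) \<le> norm a + norm b + norm (c::'a::real_normed_vector)"
  using norm_triangle_ineq4[of "a+b" c] norm_triangle_ineq[of a b] by linarith

lemma lin_contr:
  fixes A :: "real^'n^'m" and J :: "real^'N^'n"
  assumes "spec_norm A \<le> 1" "spec_norm J \<le> 1"
  shows "norm (x - A *v (J *v (transpose J *v (transpose A *v x)))) ^ 2
         \<le> norm x ^ 2 - norm (transpose J *v (transpose A *v x)) ^ 2"
proof (rule contr)
  let ?w = "transpose J *v (transpose A *v x)"
  show "norm (A *v (J *v ?w)) \<le> norm ?w"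
    using sn_le1[OF assms(1)] sn_le1[OF assms(2)] order_trans by blast
  have "inner x (A *v (J *v ?w)) = inner (transpose A *v x) (J *v ?w)" by (rule adj[symmetric])
  also have "\<dots> = inner ?w ?w" by (rule adj[symmetric])
  finally show "inner x (A *v (J *v ?w)) = norm ?w ^ 2" by (simp add: power2_norm_eq_inner)
qed

lemma pow_bound:
  fixes e :: real and t :: nat
  assumes "0 \<le> e" "real t * e \<le> 1/2"
  shows "(1 + e) ^ t \<le> 16/9"
proof -
  have "(1 + e) ^ t \<le> exp e ^ t" using assms(1) by (intro power_mono) simp_all
  also have "\<dots> = exp (real t * e)" by (simp add: exp_of_nat_mult)
  also have "\<dots> \<le> exp (1/2)" using assms(2) by simp
  also have "\<dots> \<le> 16/9"
  proof -
    have "exp (1/2::real) ^ 2 = exp 1" by (simp add: exp_of_nat_mult[symmetric])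
    also have "\<dots> \<le> 3" by (rule exp_le)
    also have "(3::real) \<le> (16/9)^2" by (simp add: power2_eq_square)
    finally have e: "exp (1/2::real) ^ 2 \<le> (16/9) ^ 2" .
    show ?thesis by (rule power2_le_imp_le[OF e]) simp
  qed
  finally show ?thesis .
qed

theorem corollary3p1:
  fixes f :: "real^'N \<Rightarrow> real^'n"
    and Jf :: "real^'N \<Rightarrow> real^'N^'n"
    and J :: "real^'N^'n"
    and A :: "real^'n^'m"
    and y :: "real^'m"
    and \<theta> \<theta>t :: "nat \<Rightarrow> real^'N"
    and \<epsilon> R :: real
    and T :: nat
  assumes deriv: "\<And>x. (f has_derivative (\<lambda>h. Jf x *v h)) (at x)"
    and Jcont: "continuous_on UNIV Jf"
    and gamma: "spec_norm A \<le> 1"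
    and iter: "\<And>t. \<theta> (Suc t) = \<theta> t - transpose (Jf (\<theta> t)) *v (transpose A *v (A *v f (\<theta> t) - y))"
    and iter_lin: "\<And>t. \<theta>t (Suc t) = \<theta>t t - transpose J *v (transpose A *v
                     (A *v f (\<theta> 0) + A *v (J *v (\<theta>t t - \<theta> 0)) - y))"
    and start: "\<theta>t 0 = \<theta> 0"
    and A1: "spec_norm J \<le> 1" "\<And>x. spec_norm (Jf x) \<le> 1"
    and A2: "spec_norm (Jf (\<theta> 0) - J) \<le> \<epsilon>"
            "spec_norm (Jf (\<theta> 0) ** transpose (Jf (\<theta> 0)) - J ** transpose J) \<le> \<epsilon>\<^sup>2"
    and A3: "\<epsilon> > 0" "R > 0"
            "\<And>x. norm (x - \<theta> 0) \<le> R \<Longrightarrow> spec_norm (Jf x - Jf (\<theta> 0)) \<le> \<epsilon> / 2"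
    and eps_le: "\<epsilon> \<le> 1"
    and T_le: "real T \<le> 1 / (2 * \<epsilon>\<^sup>2)"
    and R_ge: "R \<ge> 2 * norm (A *v f (\<theta> 0) - y) * (sqrt (real T) + 2 * \<epsilon> * (real T)\<^sup>2)"
  shows "\<forall>\<tau>\<le>T.
           norm (\<theta> \<tau> - \<theta> 0) \<le> R / 2
         \<and> norm ((A *v f (\<theta> 0) + A *v (J *v (\<theta>t \<tau> - \<theta> 0)) - y) - (A *v f (\<theta> \<tau>) - y))
             \<le> 4 * \<epsilon> * real \<tau> * norm (A *v f (\<theta> 0) - y)
         \<and> norm (\<theta>t \<tau> - \<theta> \<tau>) \<le> 2 * \<epsilon> * (real \<tau>)\<^sup>2 * norm (A *v f (\<theta> 0) - y)"
proof -
  define r0 where "r0 = A *v f (\<theta> 0) - y"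
  define R0 where "R0 = norm r0"
  define rl where "rl t = A *v f (\<theta> 0) + A *v (J *v (\<theta>t t - \<theta> 0)) - y" for t
  define rn where "rn t = A *v f (\<theta> t) - y" for t
  define g where "g t = transpose J *v (transpose A *v rl t)" for t
  define J0 where "J0 = Jf (\<theta> 0)"
  have R0nn: "0 \<le> R0" unfolding R0_def by simp
  have eps2: "\<epsilon>\<^sup>2 \<le> \<epsilon>" using A3(1) eps_le by (simp add: power2_eq_square mult_left_le)
  have th_lin: "\<theta>t (Suc t) = \<theta>t t - g t" for t using iter_lin[of t] unfolding g_def rl_def by simp
  have rl_step: "rl (Suc t) = rl t - A *v (J *v (transpose J *v (transpose A *v rl t)))" for t
    unfolding rl_def th_lin g_def by (simp add: algebra_simps)
  have rl_dec: "norm (rl (Suc t))^2 \<le> norm (rl t)^2 - norm (g t)^2" for t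
    unfolding rl_step g_def by (rule lin_contr[OF gamma A1(1)])
  have rl0: "rl 0 = r0" unfolding rl_def r0_def start by simp
  have lin: "norm (rl t) \<le> R0 \<and> norm (\<theta>t t - \<theta> 0)^2 \<le> real t * (R0^2 - norm (rl t)^2)" for t
  proof (induction t)
    case 0 then show ?case using rl0 R0_def start by simp
  next
    case (Suc t)
    have IH1: "norm (rl t) \<le> R0" and IH2: "norm (\<theta>t t - \<theta> 0)^2 \<le> real t * (R0^2 - norm (rl t)^2)"
      using Suc by auto
    have p1: "norm (rl t)^2 \<le> R0^2" using power_mono[OF IH1 norm_ge_zero] .
    have S0: "0 \<le> R0^2 - norm (rl t)^2" using p1 by linarith
    have "norm (rl (Suc t))^2 \<le> R0^2"
      using rl_dec[of t] p1 zero_le_power2[of "norm (g t)"] by linarith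
    then have n1: "norm (rl (Suc t)) \<le> R0" by (rule power2_le_imp_le[OF _ R0nn])
    have "norm (\<theta>t (Suc t) - \<theta> 0) \<le> norm (\<theta>t t - \<theta> 0) + norm (g t)"
      unfolding th_lin using norm_triangle_ineq4[of "\<theta>t t - \<theta> 0" "g t"] by (simp add: algebra_simps)
    then have "norm (\<theta>t (Suc t) - \<theta> 0)^2 \<le> (norm (\<theta>t t - \<theta> 0) + norm (g t))^2"
      by (intro power_mono) simp_all
    also have "\<dots> \<le> (real t + 1) * ((R0^2 - norm (rl t)^2) + norm (g t)^2)"
      by (rule amgm_step) (use IH2 S0 in simp_all)
    also have "\<dots> \<le> (real t + 1) * (R0^2 - norm (rl (Suc t))^2)"
      using rl_dec[of t] by (intro mult_left_mono) simp_all
    finally show ?case using n1 by (simp add: add.commute)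
  qed
  have lin2: "norm (\<theta>t t - \<theta> 0) \<le> sqrt (real t) * R0" for t
  proof -
    have "norm (\<theta>t t - \<theta> 0)^2 \<le> real t * R0^2"
    proof -
      have h: "real t * (R0^2 - norm (rl t)^2) \<le> real t * R0^2" by (intro mult_left_mono) simp_all
      show ?thesis using lin[of t] h by linarith
    qed
    then have "norm (\<theta>t t - \<theta> 0) \<le> sqrt (real t * R0^2)" by (rule real_le_rsqrt)
    also have "\<dots> = sqrt (real t) * R0" using R0nn by (simp add: real_sqrt_mult)
    finally show ?thesis .
  qed
  have Te: "real T * \<epsilon>\<^sup>2 \<le> 1/2"
    using T_le A3(1) by (simp add: le_divide_eq mult.commute)
  have pb: "t \<le> T \<Longrightarrow> (1 + \<epsilon>\<^sup>2) ^ t \<le> 16/9" for t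
  proof -
    assume "t \<le> T"
    then have "real t * \<epsilon>\<^sup>2 \<le> real T * \<epsilon>\<^sup>2" by (intro mult_right_mono) simp_all
    then show ?thesis using Te by (intro pow_bound) simp_all
  qed
  have Rb: "t \<le> T \<Longrightarrow> sqrt (real t) * R0 + 2 * \<epsilon> * (real t)\<^sup>2 * R0 \<le> R / 2" for t
  proof -
    assume tT: "t \<le> T"
    have "sqrt (real t) \<le> sqrt (real T)" using tT by simp
    moreover have "(real t)\<^sup>2 \<le> (real T)\<^sup>2" using tT by (intro power_mono) simp_all
    ultimately have "sqrt (real t) + 2 * \<epsilon> * (real t)\<^sup>2 \<le> sqrt (real T) + 2 * \<epsilon> * (real T)\<^sup>2"
    proof -
      have "2 * \<epsilon> * (real t)\<^sup>2 \<le> 2 * \<epsilon> * (real T)\<^sup>2" using A3(1) \<open>(real t)\<^sup>2 \<le> (real T)\<^sup>2\<close> by (intro mult_left_mono) simp_all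
      then show ?thesis using \<open>sqrt (real t) \<le> sqrt (real T)\<close> by linarith
    qed
    then have "R0 * (sqrt (real t) + 2 * \<epsilon> * (real t)\<^sup>2) \<le> R0 * (sqrt (real T) + 2 * \<epsilon> * (real T)\<^sup>2)"
      using R0nn by (rule mult_left_mono)
    then show ?thesis using R_ge unfolding R0_def r0_def by (simp add: algebra_simps)
  qed
  have ballJ: "norm (x - \<theta> 0) \<le> R \<Longrightarrow> norm ((Jf x - J0) *v w) \<le> \<epsilon>/2 * norm w" for x w
    unfolding J0_def by (rule sn_le, rule A3(3))
  have ballJT: "norm (x - \<theta> 0) \<le> R \<Longrightarrow> norm (transpose (Jf x - J0) *v w) \<le> \<epsilon>/2 * norm w" for x w
    unfolding J0_def by (rule snT_le, rule A3(3))
  have J0JT: "norm (transpose (J0 - J) *v w) \<le> \<epsilon> * norm w" for w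
    unfolding J0_def by (rule snT_le, rule A2(1))
  have main: "t \<le> T \<longrightarrow> norm (\<theta> t - \<theta> 0) \<le> R / 2
         \<and> norm (rl t - rn t) \<le> 4 * \<epsilon> * real t * R0
         \<and> norm (\<theta>t t - \<theta> t) \<le> 2 * \<epsilon> * (real t)\<^sup>2 * R0
         \<and> norm (rn t)^2 \<le> (1 + \<epsilon>\<^sup>2)^t * R0^2" for t
  proof (induction t)
    case 0 then show ?case using A3(2) start unfolding rl_def rn_def R0_def r0_def by simp
  next
    case (Suc t)
    show ?case
    proof
      assume sT: "Suc t \<le> T"
      then have tT: "t \<le> T" by simp
      have ih_th: "norm (\<theta> t - \<theta> 0) \<le> R / 2" and ih_e: "norm (rl t - rn t) \<le> 4 * \<epsilon> * real t * R0"
        and ih_d: "norm (\<theta>t t - \<theta> t) \<le> 2 * \<epsilon> * (real t)\<^sup>2 * R0"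
        and ih_r: "norm (rn t)^2 \<le> (1 + \<epsilon>\<^sup>2)^t * R0^2" using Suc tT by auto
      have "norm (rn t)^2 \<le> 16/9 * R0^2"
        using ih_r mult_right_mono[OF pb[OF tT] zero_le_power2[of R0]] by linarith
      also have "\<dots> = (4/3 * R0)^2" by (simp add: power2_eq_square)
      finally have rnb: "norm (rn t) \<le> 4/3 * R0" by (rule power2_le_imp_le) (use R0nn in simp)
      define Jt where "Jt = Jf (\<theta> t)"
      define q where "q = transpose A *v rn t"
      define u where "u = transpose Jt *v q"
      have th_step: "\<theta> (Suc t) = \<theta> t - u" unfolding u_def q_def Jt_def rn_def by (rule iter)
      have qb: "norm q \<le> norm (rn t)" unfolding q_def by (rule snT_le1[OF gamma])
      have ub: "norm u \<le> norm q" unfolding u_def Jt_def by (rule snT_le1[OF A1(2)])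
      have thR: "norm (\<theta> t - \<theta> 0) \<le> R" using ih_th A3(2) by simp
      have ug: "u - g t = transpose J *v (transpose A *v (rn t - rl t)) + transpose (Jt - J0) *v q + transpose (J0 - J) *v q"
        unfolding u_def g_def q_def by (simp add: algebra_simps)
      have "norm (u - g t) \<le> norm (transpose J *v (transpose A *v (rn t - rl t))) + norm (transpose (Jt - J0) *v q) + norm (transpose (J0 - J) *v q)"
        unfolding ug by (rule tri3)
      also have "\<dots> \<le> norm (rl t - rn t) + \<epsilon>/2 * norm q + \<epsilon> * norm q"
      proof -
        have "norm (transpose J *v (transpose A *v (rn t - rl t))) \<le> norm (rn t - rl t)"
          using snT_le1[OF A1(1)] snT_le1[OF gamma] order_trans by blast
        moreover have "norm (transpose (Jt - J0) *v q) \<le> \<epsilon>/2 * norm q" unfolding Jt_def by (rule ballJT[OF thR])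
        ultimately show ?thesis using J0JT[of q] by (simp add: norm_minus_commute)
      qed
      finally have ugb: "norm (u - g t) \<le> norm (rl t - rn t) + 3/2 * \<epsilon> * norm q" by simp
      have dstep: "\<theta>t (Suc t) - \<theta> (Suc t) = (\<theta>t t - \<theta> t) + (u - g t)"
        unfolding th_lin th_step by simp
      have "\<epsilon> * norm q \<le> \<epsilon> * (4/3 * R0)" using qb rnb A3(1) by (intro mult_left_mono) simp_all
      then have dnew: "norm (\<theta>t (Suc t) - \<theta> (Suc t)) \<le> 2 * \<epsilon> * (real (Suc t))\<^sup>2 * R0"
        using ih_d ih_e ugb norm_triangle_ineq[of "\<theta>t t - \<theta> t" "u - g t"] unfolding dstep
        by (simp add: power2_eq_square algebra_simps)
      have thnew: "norm (\<theta> (Suc t) - \<theta> 0) \<le> R / 2"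
      proof -
        have "norm (\<theta> (Suc t) - \<theta> 0) \<le> norm (\<theta>t (Suc t) - \<theta> 0) + norm (\<theta>t (Suc t) - \<theta> (Suc t))"
          using norm_triangle_ineq4[of "\<theta>t (Suc t) - \<theta> 0" "\<theta>t (Suc t) - \<theta> (Suc t)"] by simp
        also have "\<dots> \<le> sqrt (real (Suc t)) * R0 + 2 * \<epsilon> * (real (Suc t))\<^sup>2 * R0"
          using lin2[of "Suc t"] dnew by simp
        also have "\<dots> \<le> R / 2" by (rule Rb[OF sT])
        finally show ?thesis .
      qed
      define S where "S = cball (\<theta> 0) R"
      have cS: "convex S" unfolding S_def by simp
      have inS: "x \<in> S \<longleftrightarrow> norm (x - \<theta> 0) \<le> R" for x
        unfolding S_def by (simp add: dist_norm norm_minus_commute)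
      have tS: "\<theta> t \<in> S" using thR inS by simp
      have sS: "\<theta> (Suc t) \<in> S" using thnew A3(2) inS by simp
      define z where "z = A *v f (\<theta> (Suc t)) - A *v f (\<theta> t)"
      define k where "k = A *v (Jt *v u)"
      define v where "v = z + k"
      have zb: "norm z \<le> 1 * norm (\<theta> (Suc t) - \<theta> t)" unfolding z_def
      proof (rule differentiable_bound[OF cS _ _ sS tS])
        fix x assume "x \<in> S"
        show "((\<lambda>x. A *v f x) has_derivative (\<lambda>h. A *v (Jf x *v h))) (at x within S)"
          by (rule has_derivative_at_withinI,
              rule bounded_linear.has_derivative[OF matrix_vector_mul_bounded_linear deriv])
        show "onorm (\<lambda>h. A *v (Jf x *v h)) \<le> 1"
          by (rule onorm_le) (use sn_le1[OF gamma] sn_le1[OF A1(2)] order_trans in fastforce)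
      qed
      have vb: "norm v \<le> \<epsilon> * norm (\<theta> (Suc t) - \<theta> t)"
      proof -
        have "norm ((A *v (f (\<theta> (Suc t)) - Jt *v \<theta> (Suc t))) - (A *v (f (\<theta> t) - Jt *v \<theta> t))) \<le> \<epsilon> * norm (\<theta> (Suc t) - \<theta> t)"
        proof (rule differentiable_bound[OF cS _ _ sS tS])
          fix x assume xS: "x \<in> S"
          show "((\<lambda>x. A *v (f x - Jt *v x)) has_derivative (\<lambda>h. A *v (Jf x *v h - Jt *v h))) (at x within S)"
            by (rule has_derivative_at_withinI,
                rule bounded_linear.has_derivative[OF matrix_vector_mul_bounded_linear],
                rule has_derivative_diff[OF deriv],
                rule bounded_linear_imp_has_derivative, simp)
          show "onorm (\<lambda>h. A *v (Jf x *v h - Jt *v h)) \<le> \<epsilon>"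
          proof (rule onorm_le)
            fix h
            have xR: "norm (x - \<theta> 0) \<le> R" using xS inS by simp
            have "norm (A *v (Jf x *v h - Jt *v h)) \<le> norm (Jf x *v h - Jt *v h)" by (rule sn_le1[OF gamma])
            also have "\<dots> \<le> norm ((Jf x - J0) *v h) + norm ((Jt - J0) *v h)"
            proof -
              have eqh: "Jf x *v h - Jt *v h = (Jf x - J0) *v h - (Jt - J0) *v h" by (simp add: algebra_simps)
              show ?thesis unfolding eqh by (rule norm_triangle_ineq4)
            qed
            also have "\<dots> \<le> \<epsilon>/2 * norm h + \<epsilon>/2 * norm h"
              using ballJ[OF xR, of h] ballJ[OF thR, of h] unfolding Jt_def by simp
            finally show "norm (A *v (Jf x *v h - Jt *v h)) \<le> \<epsilon> * norm h" by simp
          qed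
        qed
        moreover have "(A *v (f (\<theta> (Suc t)) - Jt *v \<theta> (Suc t))) - (A *v (f (\<theta> t) - Jt *v \<theta> t)) = v"
          unfolding v_def z_def k_def th_step by (simp add: algebra_simps)
        ultimately show ?thesis by simp
      qed
      have dth: "norm (\<theta> (Suc t) - \<theta> t) = norm u" unfolding th_step by simp
      have rn_step: "rn (Suc t) = rn t + z" unfolding rn_def z_def by simp
      have ik: "inner (rn t) k = norm u ^ 2"
      proof -
        have "inner (rn t) k = inner q (Jt *v u)" unfolding k_def q_def by (rule adj[symmetric])
        also have "\<dots> = inner u u" unfolding u_def by (rule adj[symmetric])
        finally show ?thesis by (simp add: power2_norm_eq_inner)
      qed
      have "norm (rn (Suc t))^2 \<le> (1 + \<epsilon>\<^sup>2) * norm (rn t)^2"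
        unfolding rn_step
        by (rule nl[of z u v k]) (use zb vb dth A3(1) ik in \<open>simp_all add: v_def\<close>)
      also have "\<dots> \<le> (1 + \<epsilon>\<^sup>2) * ((1 + \<epsilon>\<^sup>2)^t * R0^2)"
        using ih_r by (intro mult_left_mono) simp_all
      finally have rnew: "norm (rn (Suc t))^2 \<le> (1 + \<epsilon>\<^sup>2)^(Suc t) * R0^2" by (simp add: mult.assoc)
      define ee where "ee = rl t - rn t"
      define w2 where "w2 = Jt *v (transpose Jt *v q) - J *v (transpose J *v q)"
      have eq3: "(J0 ** transpose J0 - J ** transpose J) *v q = J0 *v (transpose J0 *v q) - J *v (transpose J *v q)"
        by (simp only: matrix_vector_mult_diff_rdistrib matrix_vector_mul_assoc)
      have w2eq: "w2 = Jt *v (transpose (Jt - J0) *v q) + (Jt - J0) *v (transpose J0 *v q) + (J0 ** transpose J0 - J ** transpose J) *v q"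
        unfolding eq3 w2_def by (simp add: algebra_simps)
      have w2b: "norm w2 \<le> 2 * \<epsilon> * norm q"
      proof -
        have a: "norm (Jt *v (transpose (Jt - J0) *v q)) \<le> \<epsilon>/2 * norm q"
          using sn_le1[OF A1(2), of "\<theta> t" "transpose (Jt - J0) *v q"] ballJT[OF thR, of q] unfolding Jt_def by simp
        have b: "norm ((Jt - J0) *v (transpose J0 *v q)) \<le> \<epsilon>/2 * norm q"
        proof -
          have "norm ((Jt - J0) *v (transpose J0 *v q)) \<le> \<epsilon>/2 * norm (transpose J0 *v q)"
            unfolding Jt_def by (rule ballJ[OF thR])
          also have "\<dots> \<le> \<epsilon>/2 * norm q" using A3(1) snT_le1[OF A1(2), of "\<theta> 0" q] unfolding J0_def
            by (intro mult_left_mono) simp_all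
          finally show ?thesis .
        qed
        have c: "norm ((J0 ** transpose J0 - J ** transpose J) *v q) \<le> \<epsilon>\<^sup>2 * norm q"
          unfolding J0_def by (rule sn_le, rule A2(2))
        have "norm w2 \<le> \<epsilon>/2 * norm q + \<epsilon>/2 * norm q + \<epsilon>\<^sup>2 * norm q"
          unfolding w2eq by (rule order_trans[OF tri3]) (use a b c in linarith)
        moreover have "\<epsilon>\<^sup>2 * norm q \<le> \<epsilon> * norm q" using eps2 by (intro mult_right_mono) simp_all
        ultimately show ?thesis by simp
      qed
      have eeq: "rl (Suc t) - rn (Suc t) = (ee - A *v (J *v (transpose J *v (transpose A *v ee)))) + A *v w2 - v"
        unfolding rl_step rn_step v_def k_def w2_def ee_def u_def q_def by (simp add: algebra_simps)
      have t1: "norm (ee - A *v (J *v (transpose J *v (transpose A *v ee)))) \<le> norm ee"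
      proof (rule power2_le_imp_le)
        show "norm (ee - A *v (J *v (transpose J *v (transpose A *v ee)))) ^ 2 \<le> norm ee ^ 2"
          using lin_contr[OF gamma A1(1), of ee] zero_le_power2[of "norm (transpose J *v (transpose A *v ee))"] by linarith
      qed simp
      have t2: "norm (A *v w2) \<le> 2 * \<epsilon> * norm q" using sn_le1[OF gamma, of w2] w2b by simp
      have t3: "norm v \<le> \<epsilon> * norm q" using vb dth mult_left_mono[OF ub less_imp_le[OF A3(1)]] by simp
      have "norm (rl (Suc t) - rn (Suc t)) \<le> norm ee + 2 * \<epsilon> * norm q + \<epsilon> * norm q"
        unfolding eeq by (rule order_trans[OF tri3m]) (use t1 t2 t3 in linarith)
      also have "\<dots> \<le> 4 * \<epsilon> * real t * R0 + 3 * (\<epsilon> * (4/3 * R0))"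
        using ih_e \<open>\<epsilon> * norm q \<le> \<epsilon> * (4/3 * R0)\<close> unfolding ee_def by linarith
      finally have enew: "norm (rl (Suc t) - rn (Suc t)) \<le> 4 * \<epsilon> * real (Suc t) * R0"
        by (simp add: algebra_simps)
      show "norm (\<theta> (Suc t) - \<theta> 0) \<le> R / 2
         \<and> norm (rl (Suc t) - rn (Suc t)) \<le> 4 * \<epsilon> * real (Suc t) * R0
         \<and> norm (\<theta>t (Suc t) - \<theta> (Suc t)) \<le> 2 * \<epsilon> * (real (Suc t))\<^sup>2 * R0
         \<and> norm (rn (Suc t))^2 \<le> (1 + \<epsilon>\<^sup>2)^(Suc t) * R0^2"
        using thnew enew dnew rnew by blast
    qed
  qed
  show ?thesis
  proof (intro allI impI)
    fix \<tau> assume "\<tau> \<le> T"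
    then show "norm (\<theta> \<tau> - \<theta> 0) \<le> R / 2
         \<and> norm ((A *v f (\<theta> 0) + A *v (J *v (\<theta>t \<tau> - \<theta> 0)) - y) - (A *v f (\<theta> \<tau>) - y))
             \<le> 4 * \<epsilon> * real \<tau> * norm (A *v f (\<theta> 0) - y)
         \<and> norm (\<theta>t \<tau> - \<theta> \<tau>) \<le> 2 * \<epsilon> * (real \<tau>)\<^sup>2 * norm (A *v f (\<theta> 0) - y)"
      using main[of \<tau>] unfolding rl_def rn_def R0_def r0_def by blast
  qed
qed

end
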